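(* Assume $\bar L>0$ and consider the $l$-th cycle of RPF-SFISTA. Then: (a) the cycle stops (either by a restart in step (iv) or by termination in step (v)) after at most $$\left\lceil(1+Q_l)\log^+_1\!\left(\frac{C_{\bar\mu}(z_{l-1})\,\zeta_l^2}{\chi\hat\epsilon^2}\right)+1\right\rceil+\left\lceil\frac{\log^+_0\big(2\bar L/((1-\chi)\underline M_l)\big)}{\log\beta}\right\rceil$$ ACG iterations/resolvent evaluations; (b) if the cycle terminates in step (v), its output $(y,v,\xi,L)$ satisfies $\phi(\xi)\le\min\{\phi(z_0),\phi(y)\}$ and $\bar M_0\le L\le\max\{\bar M_0,\kappa\bar L\}$, and $(y,v)$ is an $\hat\epsilon$-optimal solution; (c) if $\mu_{l-1}\in(0,\bar\mu]$, then the cycle never restarts and terminates in step (v) with an output as in (b), within the number of ACG iterations/resolvent evaluations given in (a).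
   Context: Setup. Let $f:\mathbb R^n\to\mathbb R$ be convex and differentiable with $\|\nabla f(z')-\nabla f(z)\|\le\bar L\|z'-z\|$ for all $z,z'\in\mathbb R^n$ (some $\bar L\ge0$). Let $h:\mathbb R^n\to(-\infty,\infty]$ be proper, lower semicontinuous and convex with domain $\mathcal H$. Let $\phi:=f+h$ be $\bar\mu$-strongly convex for some $\bar\mu>0$, with (unique) minimizer $z^*$. Write $\ell_f(u;x):=f(x)+\langle\nabla f(x),u-x\rangle$. Define $C_{\bar\mu}(z):=\frac{8}{\bar\mu}[\phi(z)-\phi(z^* )]$ and $\kappa:=2\beta/(1-\chi)$. For $t>0$, $b\ge0$ let $\log^+_b(t):=\max\{\log t,b\}$. A pair $(y,v)$ is an $\hat\epsilon$-optimal solution if $v\in\nabla f(y)+\partial h(y)$ and $\|v\|\le\hat\epsilon$. RPF-SFISTA. Parameters $\chi\in(0,1)$, $\beta>1$; inputs $\mu_0>0$, $\bar M_0>0$, $z_0\in\mathcal H$, $\hat\epsilon>0$. The method runs in cycles $l=1,2,\dots$. At the start of cycle $l$: choose $\underline M_l\in[\max\{\bar M_{l-1}/4,\bar M_0\},\bar M_{l-1}]$ (so $\underline M_1=\bar M_0$), set $\mu:=\mu_{l-1}$, $x_0:=z_{l-1}$, $\xi_0:=y_0:=x_0$, $A_0:=0$, $\tau_0:=1$, $L_0:=\underline M_l$. Then for $j=1,2,\dots$: (i) set $L_j:=L_{j-1}$; (ii) compute $a_{j-1}=\frac{\tau_{j-1}+\sqrt{\tau_{j-1}^2+4\tau_{j-1}A_{j-1}L_j}}{2L_j}$,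 $\tilde x_{j-1}=\frac{A_{j-1}y_{j-1}+a_{j-1}x_{j-1}}{A_{j-1}+a_{j-1}}$, $y_j=\arg\min_{u}\{\ell_f(u;\tilde x_{j-1})+h(u)+\frac{L_j}{2}\|u-\tilde x_{j-1}\|^2\}$; if $f(y_j)\le\ell_f(y_j;\tilde x_{j-1})+\frac{(1-\chi)L_j}{4}\|y_j-\tilde x_{j-1}\|^2$ go to (iii), otherwise replace $L_j$ by $\beta L_j$ and repeat (ii); (iii) set $\xi_j:=y_j$ if $\phi(y_j)\le\phi(\xi_{j-1})$ and $\xi_j:=\xi_{j-1}$ otherwise; $A_j:=A_{j-1}+a_{j-1}$; $\tau_j:=\tau_{j-1}+a_{j-1}\mu/2$; $s_j:=L_j(\tilde x_{j-1}-y_j)$; $x_j:=\tau_j^{-1}[\mu a_{j-1}y_j/2+\tau_{j-1}x_{j-1}-a_{j-1}s_j]$; $v_j:=\nabla f(y_j)-\nabla f(\tilde x_{j-1})+s_j$; (iv) if $\|\xi_j-x_0\|^2<\chi A_jL_j\|y_j-\tilde x_{j-1}\|^2$, the cycle ends with a restart: set $z_l:=\xi_j$, $\bar M_l:=L_j$, $\mu_l:=\mu/2$ and start cycle $l+1$; (v) otherwise, if $\|v_j\|\le\hat\epsilon$, stop and output $(y,v,\xi,L):=(y_j,v_j,\xi_j,L_j)$; else go to iteration $j+1$. Each computation of a point $y_j$ in (ii) (including repetitions in the line search) counts as one ACG iteration/resolvent evaluation. Cycle quantities: $\zeta_l:=\bar L+\max\{\underline M_l,\kappa\bar L\}$ and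 $Q_l:=2\sqrt2\sqrt{\max\{\underline M_l,\kappa\bar L\}/\mu_{l-1}}$. *)

theory Defs
  imports "HOL-Analysis.Analysis"
begin

text \<open>The nonsmooth part h : R^n -> (-infinity, infinity] is represented by its (nonempty)
domain H and its real values on H (h is taken to be +infinity outside H).\<close>

definition strongly_convex_on :: "'a::real_inner set \<Rightarrow> real \<Rightarrow> ('a \<Rightarrow> real) \<Rightarrow> bool" where
  "strongly_convex_on H m g \<longleftrightarrow> convex H \<and>
     (\<forall>x\<in>H. \<forall>y\<in>H. \<forall>t\<in>{0..1}.
        g ((1 - t) *\<^sub>R x + t *\<^sub>R y) \<le> (1 - t) * g x + t * g y - m / 2 * t * (1 - t) * (norm (x - y))\<^sup>2)"

definition subdiff :: "('a::real_inner \<Rightarrow> real) \<Rightarrow> 'a set \<Rightarrow> 'a \<Rightarrow> 'a set" where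
  "subdiff h H y = {w. y \<in> H \<and> (\<forall>u\<in>H. h y + inner w (u - y) \<le> h u)}"

definition logp :: "real \<Rightarrow> real \<Rightarrow> real" where
  "logp b t = max (ln t) b"

definition lin_f :: "('a::real_inner \<Rightarrow> real) \<Rightarrow> ('a \<Rightarrow> 'a) \<Rightarrow> 'a \<Rightarrow> 'a \<Rightarrow> real" where
  "lin_f f gf u x = f x + inner (gf x) (u - x)"

definition prox_step :: "('a::real_inner \<Rightarrow> real) \<Rightarrow> ('a \<Rightarrow> 'a) \<Rightarrow> ('a \<Rightarrow> real) \<Rightarrow> 'a set \<Rightarrow> real \<Rightarrow> 'a \<Rightarrow> 'a" where
  "prox_step f gf h H L xt =
     (THE u. u \<in> H \<and> (\<forall>w\<in>H. lin_f f gf u xt + h u + L / 2 * (norm (u - xt))\<^sup>2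
                              \<le> lin_f f gf w xt + h w + L / 2 * (norm (w - xt))\<^sup>2))"

text \<open>State of a cycle after each ACG iteration (= each resolvent evaluation).
  CRun Lt A tau x y xi : iteration in progress, Lt is the next trial value of L_j,
    (A,tau,x,y,xi) = (A_{j-1},tau_{j-1},x_{j-1},y_{j-1},xi_{j-1});
  CRestart xi L : the cycle ended with a restart in step (iv), z_l = xi, Mbar_l = L;
  CStop y v xi L : the method stopped in step (v) with output (y,v,xi,L).\<close>
datatype 'a cstate =
    CRun real real real 'a 'a 'a
  | CRestart 'a real
  | CStop 'a 'a 'a real

definition cycle_step ::
  "('a::real_inner \<Rightarrow> real) \<Rightarrow> ('a \<Rightarrow> 'a) \<Rightarrow> ('a \<Rightarrow> real) \<Rightarrow> 'a set \<Rightarrow>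
   real \<Rightarrow> real \<Rightarrow> real \<Rightarrow> 'a \<Rightarrow> real \<Rightarrow> 'a cstate \<Rightarrow> 'a cstate" where
  "cycle_step f gf h H chi beta mu x0 eps st =
    (case st of
      CRun Lt A tau x y xi \<Rightarrow>
        (let a = (tau + sqrt (tau\<^sup>2 + 4 * tau * A * Lt)) / (2 * Lt);
             xt = (1 / (A + a)) *\<^sub>R (A *\<^sub>R y + a *\<^sub>R x);
             yn = prox_step f gf h H Lt xt
         in if f yn \<le> lin_f f gf yn xt + (1 - chi) * Lt / 4 * (norm (yn - xt))\<^sup>2 then
              (let xin = (if f yn + h yn \<le> f xi + h xi then yn else xi);
                   An = A + a;
                   taun = tau + a * mu / 2;
                   s = Lt *\<^sub>R (xt - yn);
                   xn = (1 / taun) *\<^sub>R ((mu * a / 2) *\<^sub>R yn + tau *\<^sub>R x - a *\<^sub>R s);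
                   v = gf yn - gf xt + s
               in if (norm (xin - x0))\<^sup>2 < chi * An * Lt * (norm (yn - xt))\<^sup>2 then CRestart xin Lt
                  else if norm v \<le> eps then CStop yn v xin Lt
                  else CRun Lt An taun xn yn xin)
            else CRun (beta * Lt) A tau x y xi)
    | CRestart z L \<Rightarrow> CRestart z L
    | CStop y v xi L \<Rightarrow> CStop y v xi L)"

definition cycle_run ::
  "('a::real_inner \<Rightarrow> real) \<Rightarrow> ('a \<Rightarrow> 'a) \<Rightarrow> ('a \<Rightarrow> real) \<Rightarrow> 'a set \<Rightarrow>
   real \<Rightarrow> real \<Rightarrow> real \<Rightarrow> real \<Rightarrow> 'a \<Rightarrow> real \<Rightarrow> nat \<Rightarrow> 'a cstate" where
  "cycle_run f gf h H chi beta eps mu x0 Mlow k =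
     ((cycle_step f gf h H chi beta mu x0 eps) ^^ k) (CRun Mlow 0 1 x0 x0 x0)"

end

theory Submission
  imports Defs
begin


lemma lim0:
  fixes c d e :: real
  assumes "\<And>t. 0 < t \<Longrightarrow> t \<le> 1 \<Longrightarrow> c \<le> d + t * e"
  shows "c \<le> d"
proof (rule ccontr)
  assume "\<not> c \<le> d"
  show False
  proof (cases "e \<le> 0")
    case True then show ?thesis using assms[of 1] \<open>\<not> c \<le> d\<close> by auto
  next
    case False
    define t where "t = min 1 ((c - d) / (2 * e))"
    have "0 < t" "t \<le> 1" using False \<open>\<not> c \<le> d\<close> by (auto simp: t_def)
    have "t \<le> (c - d) / (2 * e)" unfolding t_def by simp
    then have "t * e \<le> (c - d) / (2 * e) * e" using False by (intro mult_right_mono) auto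
    also have "\<dots> = (c - d) / 2" using False by (simp add: field_simps)
    finally have "t * e \<le> (c - d) / 2" .
    then show False using assms[OF \<open>0<t\<close> \<open>t\<le>1\<close>] \<open>\<not> c \<le> d\<close> by (simp add: field_simps)
  qed
qed

lemma aux1: "(m::real) \<le> (p + q)/2 - X \<Longrightarrow> p < m + a \<Longrightarrow> q < m + b \<Longrightarrow> a \<le> c \<Longrightarrow> b \<le> c \<Longrightarrow> X \<le> c"
  by (simp add: field_simps)
lemma aux2: "(0::real) < X \<Longrightarrow> P \<le> (p + q)/2 - X \<Longrightarrow> p \<le> P \<Longrightarrow> q \<le> P \<Longrightarrow> False"
  by (simp add: field_simps)

locale ctx =
  fixes f :: "'a::euclidean_space \<Rightarrow> real" and gf :: "'a \<Rightarrow> 'a"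
    and h :: "'a \<Rightarrow> real" and H :: "'a set"
    and Lbar mubar chi beta eps :: real and zstar :: 'a
  assumes grad: "\<And>x. (f has_derivative (\<lambda>d. inner (gf x) d)) (at x)"
    and f_convex: "convex_on UNIV f"
    and f_lip: "\<And>x x'. norm (gf x' - gf x) \<le> Lbar * norm (x' - x)"
    and Lbar_pos: "Lbar > 0"
    and H_ne: "H \<noteq> {}" and H_convex: "convex H" and h_convex: "convex_on H h"
    and h_lsc: "\<And>c. closed {x \<in> H. h x \<le> c}"
    and mubar_pos: "mubar > 0"
    and phi_sc: "strongly_convex_on H mubar (\<lambda>x. f x + h x)"
    and zstar_in: "zstar \<in> H" and zstar_min: "\<And>x. x \<in> H \<Longrightarrow> f zstar + h zstar \<le> f x + h x"
    and chi0: "0 < chi" and chi1: "chi < 1" and beta: "beta > 1"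
    and eps: "eps > 0"
begin

definition "phi x = f x + h x"

lemma line_deriv:
  "((\<lambda>t. f (x + t *\<^sub>R d)) has_real_derivative inner (gf (x + t *\<^sub>R d)) d) (at t)"
proof -
  have 1: "((\<lambda>t. x + t *\<^sub>R d) has_derivative (\<lambda>s. s *\<^sub>R d)) (at t)"
    by (auto intro!: derivative_eq_intros)
  have "((\<lambda>t. f (x + t *\<^sub>R d)) has_derivative (\<lambda>s. inner (gf (x + t *\<^sub>R d)) (s *\<^sub>R d))) (at t)"
    using has_derivative_compose[OF 1 grad] by (simp add: o_def)
  then show ?thesis unfolding has_field_derivative_def
    by (rule has_derivative_eq_rhs) (auto simp: fun_eq_iff)
qed

lemma descent_both:
  shows "\<bar>f y - f x - inner (gf x) (y - x)\<bar> \<le> Lbar / 2 * (norm (y - x))\<^sup>2"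
proof -
  define d where "d = y - x"
  define g1 where "g1 t = f (x + t *\<^sub>R d) - t * inner (gf x) d - Lbar / 2 * t\<^sup>2 * (norm d)\<^sup>2" for t
  define g2 where "g2 t = f (x + t *\<^sub>R d) - t * inner (gf x) d + Lbar / 2 * t\<^sup>2 * (norm d)\<^sup>2" for t
  have D1: "(g1 has_real_derivative (inner (gf (x + t *\<^sub>R d)) d - inner (gf x) d - Lbar * t * (norm d)\<^sup>2)) (at t)" for t
    unfolding g1_def by (rule derivative_eq_intros line_deriv refl | simp)+ 
  have D2: "(g2 has_real_derivative (inner (gf (x + t *\<^sub>R d)) d - inner (gf x) d + Lbar * t * (norm d)\<^sup>2)) (at t)" for t
    unfolding g2_def by (rule derivative_eq_intros line_deriv refl | simp)+
  have key: "\<bar>inner (gf (x + t *\<^sub>R d)) d - inner (gf x) d\<bar> \<le> Lbar * t * (norm d)\<^sup>2" if "0 \<le> t" for t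
  proof -
    have "\<bar>inner (gf (x + t *\<^sub>R d)) d - inner (gf x) d\<bar> = \<bar>inner (gf (x + t *\<^sub>R d) - gf x) d\<bar>"
      by (simp add: inner_diff_left)
    also have "\<dots> \<le> norm (gf (x + t *\<^sub>R d) - gf x) * norm d" by (rule Cauchy_Schwarz_ineq2)
    also have "\<dots> \<le> Lbar * norm ((x + t *\<^sub>R d) - x) * norm d"
      by (rule mult_right_mono[OF f_lip]) simp
    also have "\<dots> = Lbar * t * (norm d)\<^sup>2" using that by (simp add: power2_eq_square)
    finally show ?thesis .
  qed
  show ?thesis
  proof (cases "d = 0")
    case True then show ?thesis by (simp add: d_def)
  next
    case False
    obtain z1 where z1: "0 < z1" "z1 < 1" "g1 1 - g1 0 = (1 - 0) * (inner (gf (x + z1 *\<^sub>R d)) d - inner (gf x) d - Lbar * z1 * (norm d)\<^sup>2)"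
      using MVT2[of 0 1 g1, OF _ D1] by auto
    obtain z2 where z2: "0 < z2" "z2 < 1" "g2 1 - g2 0 = (1 - 0) * (inner (gf (x + z2 *\<^sub>R d)) d - inner (gf x) d + Lbar * z2 * (norm d)\<^sup>2)"
      using MVT2[of 0 1 g2, OF _ D2] by auto
    have "g1 1 \<le> g1 0" using z1 key[of z1] by auto
    moreover have "g2 1 \<ge> g2 0" using z2 key[of z2] by auto
    ultimately show ?thesis unfolding g1_def g2_def d_def
      by (intro abs_leI) (simp_all add: algebra_simps)
  qed
qed

lemma descent: "f y \<le> f x + inner (gf x) (y - x) + Lbar / 2 * (norm (y - x))\<^sup>2"
  using abs_le_D1[OF descent_both[of y x]] by linarith

lemma tangent: "f x + inner (gf x) (y - x) \<le> f y"
proof -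
  define d where "d = y - x"
  have "f y - f x \<ge> inner (gf x) d + t * (- Lbar / 2 * (norm d)\<^sup>2)" if "0 < t" "t \<le> 1" for t
  proof -
    have c: "f (x + t *\<^sub>R d) \<le> (1 - t) * f x + t * f y"
      using convex_onD[OF f_convex, of t x y] that by (simp add: d_def algebra_simps)
    have "f (x + t *\<^sub>R d) \<ge> f x + inner (gf x) (t *\<^sub>R d) - Lbar / 2 * (norm (t *\<^sub>R d))\<^sup>2"
      using abs_le_D2[OF descent_both[of "x + t *\<^sub>R d" x]] by simp
    then have "t * (f y - f x) \<ge> t * (inner (gf x) d - t * Lbar / 2 * (norm d)\<^sup>2)"
      using c that by (simp add: power2_eq_square algebra_simps)
    then have "inner (gf x) d - t * Lbar / 2 * (norm d)\<^sup>2 \<le> f y - f x"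
      using mult_le_cancel_left_pos[OF \<open>0<t\<close>] by blast
    then show ?thesis by (simp add: algebra_simps)
  qed
  then show ?thesis using lim0[of "inner (gf x) d" "f y - f x" "Lbar / 2 * (norm d)\<^sup>2"]
    by (simp add: d_def algebra_simps)
qed

end


lemma quad_lb:
  fixes e p :: "'a::real_inner"
  assumes "L > 0"
  shows "- (norm e)\<^sup>2 / (2 * L) \<le> inner e p + L / 2 * (norm p)\<^sup>2"
proof -
  have "0 \<le> (norm (e + L *\<^sub>R p))\<^sup>2" by simp
  also have "\<dots> = (norm e)\<^sup>2 + 2 * L * inner e p + L\<^sup>2 * (norm p)\<^sup>2"
    unfolding power2_norm_eq_inner by (simp add: inner_add_left inner_add_right inner_commute power2_eq_square algebra_simps)
  finally show ?thesis using assms by (simp add: field_simps power2_eq_square)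
qed

lemma mid_norm:
  fixes p q :: "'a::real_inner"
  shows "(norm ((1/2) *\<^sub>R p + (1/2) *\<^sub>R q))\<^sup>2 = ((norm p)\<^sup>2 + (norm q)\<^sup>2) / 2 - (norm (p - q))\<^sup>2 / 4"
  by (simp add: power2_norm_eq_inner inner_add_left inner_add_right inner_diff_left inner_diff_right inner_commute field_simps)

context ctx begin

lemma sc_ineq:
  assumes "x \<in> H" "y \<in> H" "0 \<le> t" "t \<le> 1"
  shows "phi ((1 - t) *\<^sub>R x + t *\<^sub>R y) \<le> (1 - t) * phi x + t * phi y - mubar / 2 * t * (1 - t) * (norm (x - y))\<^sup>2"
  using phi_sc assms unfolding strongly_convex_on_def phi_def by auto

lemma sc_dist:
  assumes "w \<in> H"
  shows "mubar / 2 * (norm (w - zstar))\<^sup>2 \<le> phi w - phi zstar"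
proof -
  have "mubar / 2 * (norm (w - zstar))\<^sup>2 \<le> (phi w - phi zstar) + t * (mubar / 2 * (norm (w - zstar))\<^sup>2)"
    if "0 < t" "t \<le> 1" for t
  proof -
    have p: "(1 - t) *\<^sub>R zstar + t *\<^sub>R w \<in> H" using H_convex zstar_in assms that
      by (simp add: convex_def)
    have "phi zstar \<le> phi ((1 - t) *\<^sub>R zstar + t *\<^sub>R w)" using zstar_min[OF p] by (simp add: phi_def)
    also have "\<dots> \<le> (1 - t) * phi zstar + t * phi w - mubar / 2 * t * (1 - t) * (norm (zstar - w))\<^sup>2"
      using sc_ineq[OF zstar_in assms] that by simp
    finally have "t * (mubar / 2 * (1 - t) * (norm (w - zstar))\<^sup>2) \<le> t * (phi w - phi zstar)"
      by (simp add: norm_minus_commute algebra_simps)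
    then have "mubar / 2 * (1 - t) * (norm (w - zstar))\<^sup>2 \<le> phi w - phi zstar"
      using mult_le_cancel_left_pos[OF \<open>0<t\<close>] by blast
    moreover have "mubar / 2 * (1 - t) * (norm (w - zstar))\<^sup>2 = mubar / 2 * (norm (w - zstar))\<^sup>2 - t * (mubar / 2 * (norm (w - zstar))\<^sup>2)"
      by (simp add: field_simps)
    ultimately show ?thesis by linarith
  qed
  then show ?thesis by (rule lim0)
qed

lemma h_minorant:
  assumes "u \<in> H"
  shows "h zstar - inner (gf zstar) (u - zstar) \<le> h u"
proof -
  define d where "d = u - zstar"
  have "h zstar - inner (gf zstar) d \<le> h u + t * (Lbar / 2 * (norm d)\<^sup>2)" if "0 < t" "t \<le> 1" for t
  proof -
    have p: "(1 - t) *\<^sub>R zstar + t *\<^sub>R u \<in> H" using H_convex zstar_in assms that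
      by (simp add: convex_def)
    have pe: "(1 - t) *\<^sub>R zstar + t *\<^sub>R u = zstar + t *\<^sub>R d" by (simp add: d_def algebra_simps)
    have "f zstar + h zstar \<le> f (zstar + t *\<^sub>R d) + h ((1 - t) *\<^sub>R zstar + t *\<^sub>R u)"
      using zstar_min[OF p] pe by simp
    also have "\<dots> \<le> (f zstar + inner (gf zstar) (t *\<^sub>R d) + Lbar / 2 * (norm (t *\<^sub>R d))\<^sup>2)
                    + ((1 - t) * h zstar + t * h u)"
      using descent[of "zstar + t *\<^sub>R d" zstar] convex_onD[OF h_convex, of t zstar u] zstar_in assms that
      by (intro add_mono) auto
    finally have "t * (h zstar - inner (gf zstar) d) \<le> t * (h u + t * (Lbar / 2 * (norm d)\<^sup>2))"
      using that by (simp add: power2_eq_square algebra_simps)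
    then show ?thesis using mult_le_cancel_left_pos[OF \<open>0<t\<close>] by blast
  qed
  then have "h zstar - inner (gf zstar) d \<le> h u" by (rule lim0)
  then show ?thesis by (simp add: d_def)
qed

definition "Phi L xt u = lin_f f gf u xt + h u + L / 2 * (norm (u - xt))\<^sup>2"

lemma Phi_mid:
  assumes "y1 \<in> H" "y2 \<in> H"
  shows "Phi L xt ((1/2) *\<^sub>R y1 + (1/2) *\<^sub>R y2) \<le> (Phi L xt y1 + Phi L xt y2) / 2 - L / 8 * (norm (y1 - y2))\<^sup>2"
proof -
  have hh: "h ((1/2) *\<^sub>R y1 + (1/2) *\<^sub>R y2) \<le> (h y1 + h y2) / 2"
    using convex_onD[OF h_convex, of "1/2" y1 y2] assms by simp
  have xt2: "(1/2) *\<^sub>R xt + (1/2) *\<^sub>R xt = xt" by (simp add: scaleR_add_left[symmetric])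
  have "(1/2) *\<^sub>R (y1 - xt) + (1/2) *\<^sub>R (y2 - xt) = (1/2) *\<^sub>R y1 + (1/2) *\<^sub>R y2 - ((1/2) *\<^sub>R xt + (1/2) *\<^sub>R xt)"
    by (simp add: algebra_simps)
  then have e: "(1/2) *\<^sub>R y1 + (1/2) *\<^sub>R y2 - xt = (1/2) *\<^sub>R (y1 - xt) + (1/2) *\<^sub>R (y2 - xt)"
    by (simp only: xt2)
  have n: "(norm ((1/2) *\<^sub>R y1 + (1/2) *\<^sub>R y2 - xt))\<^sup>2 = ((norm (y1 - xt))\<^sup>2 + (norm (y2 - xt))\<^sup>2) / 2 - (norm (y1 - y2))\<^sup>2 / 4"
    unfolding e mid_norm by simp
  have l: "lin_f f gf ((1/2) *\<^sub>R y1 + (1/2) *\<^sub>R y2) xt = (lin_f f gf y1 xt + lin_f f gf y2 xt) / 2"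
    unfolding lin_f_def by (simp add: inner_diff_right inner_add_right field_simps)
  show ?thesis unfolding Phi_def l n using hh by (simp add: field_simps)
qed

lemma Phi_lb:
  assumes "L > 0" "w \<in> H"
  shows "f xt + h zstar - inner (gf zstar) (xt - zstar) - (norm (gf xt - gf zstar))\<^sup>2 / (2 * L) \<le> Phi L xt w"
proof -
  have "Phi L xt w \<ge> f xt + inner (gf xt) (w - xt) + (h zstar - inner (gf zstar) (w - zstar)) + L / 2 * (norm (w - xt))\<^sup>2"
    using h_minorant[OF assms(2)] unfolding Phi_def lin_f_def by simp
  moreover have "inner (gf xt) (w - xt) - inner (gf zstar) (w - zstar)
      = inner (gf xt - gf zstar) (w - xt) - inner (gf zstar) (xt - zstar)"
    by (simp add: inner_diff_left inner_diff_right)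
  ultimately show ?thesis using quad_lb[OF assms(1), of "gf xt - gf zstar" "w - xt"] by linarith
qed

end


context ctx begin

lemma Phi_cont: "(\<lambda>n. lin_f f gf (u n) xt + L / 2 * (norm (u n - xt))\<^sup>2) \<longlonglongrightarrow> lin_f f gf w xt + L / 2 * (norm (w - xt))\<^sup>2"
  if "u \<longlonglongrightarrow> w" for u w
  unfolding lin_f_def by (intro tendsto_intros that)

lemma prox_exists:
  assumes L: "L > 0"
  shows "\<exists>y\<in>H. \<forall>w\<in>H. Phi L xt y \<le> Phi L xt w"
proof -
  define B where "B = f xt + h zstar - inner (gf zstar) (xt - zstar) - (norm (gf xt - gf zstar))\<^sup>2 / (2 * L)"
  define S where "S = Phi L xt ` H"
  have bdd: "bdd_below S" unfolding S_def using Phi_lb[OF L] by (auto simp: bdd_below_def B_def)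
  have Sne: "S \<noteq> {}" using H_ne by (simp add: S_def)
  define m where "m = Inf S"
  have mle: "m \<le> Phi L xt w" if "w \<in> H" for w
    unfolding m_def S_def using bdd that by (auto intro!: cInf_lower simp: S_def)
  have "\<forall>n::nat. \<exists>u\<in>H. Phi L xt u < m + 1 / (real n + 1)"
  proof
    fix n :: nat
    have "Inf S < m + 1 / (real n + 1)" by (simp add: m_def)
    then obtain s where "s \<in> S" "s < m + 1 / (real n + 1)" using cInf_less_iff[OF Sne bdd] by blast
    then show "\<exists>u\<in>H. Phi L xt u < m + 1 / (real n + 1)" by (auto simp: S_def)
  qed
  then obtain u where uH: "\<And>n. u n \<in> H" and uP: "\<And>n. Phi L xt (u n) < m + 1 / (real n + 1)"
    by metis
  have dist_b: "(norm (u n - u k))\<^sup>2 \<le> 8 / L * (1 / (real M + 1))" if "n \<ge> M" "k \<ge> M" for n k M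
  proof -
    have midH: "(1/2) *\<^sub>R u n + (1/2) *\<^sub>R u k \<in> H"
      using H_convex uH by (simp add: convex_def)
    have "m \<le> (Phi L xt (u n) + Phi L xt (u k)) / 2 - L / 8 * (norm (u n - u k))\<^sup>2"
      using mle[OF midH] Phi_mid[OF uH uH, of L xt n k] by linarith
    moreover have "1 / (real n + 1) \<le> 1 / (real M + 1)" "1 / (real k + 1) \<le> 1 / (real M + 1)"
      using that by (auto simp: frac_le)
    ultimately have "L / 8 * (norm (u n - u k))\<^sup>2 \<le> 1 / (real M + 1)"
      using uP[of n] uP[of k] aux1 by blast
    have "(norm (u n - u k))\<^sup>2 = 8 / L * (L / 8 * (norm (u n - u k))\<^sup>2)" using L by simp
    also have "\<dots> \<le> 8 / L * (1 / (real M + 1))"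
      by (rule mult_left_mono) (use L \<open>L / 8 * (norm (u n - u k))\<^sup>2 \<le> 1 / (real M + 1)\<close> in auto)
    finally show ?thesis .
  qed
  have "Cauchy u"
  proof (rule CauchyI)
    fix e :: real assume e: "0 < e"
    obtain M :: nat where M: "8 / (L * e\<^sup>2) < real M" using reals_Archimedean2 by blast
    have "8 / L * (1 / (real M + 1)) < e\<^sup>2"
    proof -
      have "8 / (L * e\<^sup>2) < real M + 1" using M by simp
      then have h8: "8 < (real M + 1) * (L * e\<^sup>2)" using L e by (simp add: field_simps)
      have pos: "0 < L * (real M + 1)" using L by simp
      have "8 / (L * (real M + 1)) < e\<^sup>2" using pos h8 by (simp add: divide_less_eq algebra_simps)
      then show ?thesis by simp
    qed
    then have "\<forall>m\<ge>M. \<forall>n\<ge>M. norm (u m - u n) < e"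
      using dist_b e by (smt (verit) power_less_imp_less_base norm_ge_zero)
    then show "\<exists>M. \<forall>m\<ge>M. \<forall>n\<ge>M. norm (u m - u n) < e" by blast
  qed
  then obtain w where lim: "u \<longlonglongrightarrow> w" using Cauchy_convergent_iff convergent_def by blast
  define g where "g v = lin_f f gf v xt + L / 2 * (norm (v - xt))\<^sup>2" for v
  have glim: "(\<lambda>n. g (u n)) \<longlonglongrightarrow> g w" unfolding g_def by (rule Phi_cont[OF lim])
  have key: "w \<in> H \<and> h w \<le> m + 2 * t - g w" if t: "0 < t" for t
  proof -
    have "eventually (\<lambda>n. dist (g (u n)) (g w) < t) sequentially" using glim t by (rule tendstoD)
    then have ev1: "eventually (\<lambda>n. g w - t < g (u n)) sequentially"
      by eventually_elim (auto simp: dist_real_def abs_less_iff)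
    have "(\<lambda>n. inverse (real (Suc n))) \<longlonglongrightarrow> 0" by (rule LIMSEQ_inverse_real_of_nat)
    then have "eventually (\<lambda>n. dist (inverse (real (Suc n))) 0 < t) sequentially" using t by (rule tendstoD)
    then have ev2: "eventually (\<lambda>n. 1 / (real n + 1) < t) sequentially"
      by eventually_elim (simp add: inverse_eq_divide add.commute)
    have "eventually (\<lambda>n. u n \<in> {x \<in> H. h x \<le> m + 2 * t - g w}) sequentially"
      using ev1 ev2
    proof eventually_elim
      case (elim n)
      then show ?case using uP[of n] uH[of n] by (simp add: Phi_def g_def)
    qed
    then have "w \<in> {x \<in> H. h x \<le> m + 2 * t - g w}"
      using Lim_in_closed_set[OF h_lsc _ trivial_limit_sequentially lim] by blast
    then show ?thesis by simp
  qed
  have wH: "w \<in> H" using key[of 1] by simp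
  have "Phi L xt w \<le> m" 
  proof (rule lim0[where e = 2])
    fix t :: real assume "0 < t" "t \<le> 1"
    then show "Phi L xt w \<le> m + t * 2" using key[of t] by (simp add: Phi_def g_def)
  qed
  then show ?thesis using wH mle by force
qed

lemma prox_unique:
  assumes L: "L > 0" and y1: "y1 \<in> H" "\<forall>w\<in>H. Phi L xt y1 \<le> Phi L xt w"
    and y2: "y2 \<in> H" "\<forall>w\<in>H. Phi L xt y2 \<le> Phi L xt w"
  shows "y1 = y2"
proof (rule ccontr)
  assume ne: "y1 \<noteq> y2"
  have midH: "(1/2) *\<^sub>R y1 + (1/2) *\<^sub>R y2 \<in> H" using H_convex y1 y2 by (simp add: convex_def)
  have "0 < L / 8 * (norm (y1 - y2))\<^sup>2" using L ne by simp
  then show False using Phi_mid[OF y1(1) y2(1), of L xt] y1(2)[rule_format, OF midH] y2(2)[rule_format, OF midH]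
    aux2 by blast
qed

lemma prox_prop:
  assumes L: "L > 0"
  shows "prox_step f gf h H L xt \<in> H \<and> (\<forall>w\<in>H. Phi L xt (prox_step f gf h H L xt) \<le> Phi L xt w)"
proof -
  obtain y where y: "y \<in> H" "\<forall>w\<in>H. Phi L xt y \<le> Phi L xt w" using prox_exists[OF L] by blast
  have "prox_step f gf h H L xt = y"
    unfolding prox_step_def
  proof (rule the_equality)
    show "y \<in> H \<and> (\<forall>w\<in>H. lin_f f gf y xt + h y + L / 2 * (norm (y - xt))\<^sup>2 \<le> lin_f f gf w xt + h w + L / 2 * (norm (w - xt))\<^sup>2)"
      using y by (simp add: Phi_def)
  next
    fix u assume "u \<in> H \<and> (\<forall>w\<in>H. lin_f f gf u xt + h u + L / 2 * (norm (u - xt))\<^sup>2 \<le> lin_f f gf w xt + h w + L / 2 * (norm (w - xt))\<^sup>2)"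
    then show "u = y" using prox_unique[OF L _ _ y] by (simp add: Phi_def)
  qed
  then show ?thesis using y by simp
qed

lemma prox_subgrad:
  assumes L: "L > 0" and yd: "y = prox_step f gf h H L xt" and u: "u \<in> H"
  shows "h y + inner (L *\<^sub>R (xt - y) - gf xt) (u - y) \<le> h u"
proof -
  have yH: "y \<in> H" and ymin: "\<And>w. w \<in> H \<Longrightarrow> Phi L xt y \<le> Phi L xt w" using prox_prop[OF L] yd by auto
  define e where "e = u - y"
  have "- inner (gf xt + L *\<^sub>R (y - xt)) e + h y \<le> h u + t * (L / 2 * (norm e)\<^sup>2)" if t: "0 < t" "t \<le> 1" for t
  proof -
    have p: "(1 - t) *\<^sub>R y + t *\<^sub>R u \<in> H" using H_convex yH u t by (simp add: convex_def)
    have pe: "(1 - t) *\<^sub>R y + t *\<^sub>R u = y + t *\<^sub>R e" by (simp add: e_def algebra_simps)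
    have hc: "h ((1 - t) *\<^sub>R y + t *\<^sub>R u) \<le> (1 - t) * h y + t * h u"
      using convex_onD[OF h_convex, of t y u] yH u t by simp
    have "Phi L xt y \<le> Phi L xt (y + t *\<^sub>R e)" using ymin[OF p] pe by simp
    moreover have "Phi L xt (y + t *\<^sub>R e) \<le> lin_f f gf y xt + t * inner (gf xt) e + ((1 - t) * h y + t * h u)
          + L / 2 * ((norm (y - xt))\<^sup>2 + 2 * t * inner (y - xt) e + t\<^sup>2 * (norm e)\<^sup>2)"
    proof -
      have "lin_f f gf (y + t *\<^sub>R e) xt = lin_f f gf y xt + t * inner (gf xt) e"
        unfolding lin_f_def by (simp add: inner_add_right inner_diff_right algebra_simps)
      moreover have "(norm (y + t *\<^sub>R e - xt))\<^sup>2 = (norm (y - xt))\<^sup>2 + 2 * t * inner (y - xt) e + t\<^sup>2 * (norm e)\<^sup>2"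
      proof -
        have "y + t *\<^sub>R e - xt = (y - xt) + t *\<^sub>R e" by (simp add: algebra_simps)
        then show ?thesis unfolding power2_norm_eq_inner
          by (simp add: inner_add_left inner_add_right inner_commute power2_eq_square algebra_simps)
      qed
      ultimately show ?thesis unfolding Phi_def using hc pe by simp
    qed
    ultimately have "t * (- inner (gf xt + L *\<^sub>R (y - xt)) e + h y) \<le> t * (h u + t * (L / 2 * (norm e)\<^sup>2))"
      unfolding Phi_def by (simp add: inner_add_left algebra_simps power2_eq_square)
    then show ?thesis using mult_le_cancel_left_pos[OF \<open>0<t\<close>] by blast
  qed
  then have "- inner (gf xt + L *\<^sub>R (y - xt)) e + h y \<le> h u" by (rule lim0)
  moreover have "inner (L *\<^sub>R (xt - y) - gf xt) e = - inner (gf xt + L *\<^sub>R (y - xt)) e"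
    by (simp add: inner_add_left inner_diff_left algebra_simps)
  ultimately show ?thesis by (simp add: e_def)
qed

end


lemma quad_id:
  fixes p q r u m :: "'a::real_inner"
  assumes T: "T = t0 + al" "T \<noteq> 0" and m: "T *\<^sub>R m = t0 *\<^sub>R p + al *\<^sub>R q - r"
  shows "t0/2 * (norm (u - p))\<^sup>2 + al/2 * (norm (u - q))\<^sup>2 + inner r u
       = t0/2 * (norm (m - p))\<^sup>2 + al/2 * (norm (m - q))\<^sup>2 + inner r m + T/2 * (norm (u - m))\<^sup>2"
proof -
  have r: "r = t0 *\<^sub>R p + al *\<^sub>R q - T *\<^sub>R m" using m by (simp add: algebra_simps)
  have F: "t0/2 * (norm (v - p))\<^sup>2 + al/2 * (norm (v - q))\<^sup>2 + inner r v
        = T/2 * inner v v - T * inner m v + (t0/2 * inner p p + al/2 * inner q q)" for v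
    unfolding r power2_norm_eq_inner
    by (simp add: inner_diff_left inner_diff_right inner_add_left inner_commute T(1) algebra_simps)
  have N: "T/2 * (norm (u - m))\<^sup>2 = T/2 * inner u u - T * inner m u + T/2 * inner m m"
    unfolding power2_norm_eq_inner by (simp add: inner_diff_left inner_diff_right inner_commute algebra_simps)
  show ?thesis unfolding F N by (simp add: algebra_simps)
qed

context ctx begin

lemma lower_model:
  assumes yH: "y \<in> H" and sg: "\<And>u. u \<in> H \<Longrightarrow> h y + inner (s - gf xt) (u - y) \<le> h u"
    and ls: "f y \<le> f xt + inner (gf xt) (y - xt) + K" and u: "u \<in> H"
  shows "phi y - 2 * K + inner s (u - y) + mubar / 4 * (norm (u - y))\<^sup>2 \<le> phi u"
proof -
  define w where "w = (1 - 1/2) *\<^sub>R u + (1/2) *\<^sub>R y"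
  have wH: "w \<in> H" using H_convex yH u by (simp add: convex_def w_def)
  have sc: "phi w \<le> (1 - 1/2) * phi u + (1/2) * phi y - mubar / 2 * (1/2) * (1 - 1/2) * (norm (u - y))\<^sup>2"
    unfolding w_def by (rule sc_ineq[OF u yH]) auto
  have tg: "f xt + inner (gf xt) (w - xt) \<le> f w" by (rule tangent)
  have hs: "h y + inner (s - gf xt) (w - y) \<le> h w" by (rule sg[OF wH])
  have e1: "w - y = (1/2) *\<^sub>R (u - y)" by (simp add: w_def algebra_simps) (simp add: scaleR_add_left[symmetric])
  have "w - xt = (y - xt) + (w - y)" by simp
  then have e2: "w - xt = (y - xt) + (1/2) *\<^sub>R (u - y)" by (simp only: e1)
  have "phi w \<ge> f xt + inner (gf xt) (y - xt) + h y + (1/2) * inner s (u - y)"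
    using tg hs unfolding phi_def e1 e2 by (simp add: inner_add_right inner_diff_left algebra_simps)
  then show ?thesis using sc ls unfolding phi_def by (simp add: field_simps)
qed

end


context ctx begin

lemma G_step:
  assumes mu: "0 \<le> mu" "mu \<le> mubar" and Lt: "Lt > 0" and A: "A \<ge> 0" and tau: "tau > 0" and a: "a > 0"
    and aeq: "Lt * a\<^sup>2 = tau * (A + a)"
    and xt_eq: "(A + a) *\<^sub>R xt = A *\<^sub>R y + a *\<^sub>R x"
    and yH: "y \<in> H" and ynH: "yn \<in> H"
    and sdef: "s = Lt *\<^sub>R (xt - yn)"
    and sg: "\<And>u. u \<in> H \<Longrightarrow> h yn + inner (s - gf xt) (u - yn) \<le> h u"
    and ls: "f yn \<le> lin_f f gf yn xt + (1 - chi) * Lt / 4 * (norm (yn - xt))\<^sup>2"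
    and G1: "A * phi y \<le> G" and G2: "\<And>u. u \<in> H \<Longrightarrow> G + tau / 2 * (norm (u - x))\<^sup>2 \<le> A * phi u + 1/2 * (norm (u - x0))\<^sup>2"
    and taun: "taun = tau + a * mu / 2"
    and xn: "xn = (1 / taun) *\<^sub>R ((mu * a / 2) *\<^sub>R yn + tau *\<^sub>R x - a *\<^sub>R s)"
  shows "\<exists>G'. (A + a) * (phi yn + chi * Lt / 2 * (norm (yn - xt))\<^sup>2) \<le> G'
           \<and> (\<forall>u\<in>H. G' + taun / 2 * (norm (u - xn))\<^sup>2 \<le> (A + a) * phi u + 1/2 * (norm (u - x0))\<^sup>2)"
proof -
  define nd where "nd = (norm (yn - xt))\<^sup>2"
  define c where "c = phi yn - (1 - chi) * Lt / 2 * nd"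
  define gam where "gam u = c + inner s (u - yn) + mu / 4 * (norm (u - yn))\<^sup>2" for u
  have lm: "gam u \<le> phi u" if u: "u \<in> H" for u
  proof -
    have "phi yn - 2 * ((1 - chi) * Lt / 4 * nd) + inner s (u - yn) + mubar / 4 * (norm (u - yn))\<^sup>2 \<le> phi u"
      by (rule lower_model[OF ynH sg _ u]) (use ls in \<open>auto simp: lin_f_def nd_def\<close>)
    moreover have "mu / 4 * (norm (u - yn))\<^sup>2 \<le> mubar / 4 * (norm (u - yn))\<^sup>2"
      using mu by (intro mult_right_mono) auto
    ultimately show ?thesis unfolding gam_def c_def by (simp add: field_simps)
  qed
  have gam_lin: "c + inner s (v - yn) \<le> gam v" for v using mu unfolding gam_def by simp
  define Gam where "Gam u = G + tau / 2 * (norm (u - x))\<^sup>2 + a * gam u" for u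
  have taun_pos: "taun > 0" using taun tau a mu by (simp add: add_pos_nonneg)
  have xn_eq: "taun *\<^sub>R xn = tau *\<^sub>R x + (a * mu / 2) *\<^sub>R yn - a *\<^sub>R s"
    using taun_pos by (simp add: xn algebra_simps)
  have Gam_alt: "Gam u = (G + a * c - a * inner s yn) + (tau / 2 * (norm (u - x))\<^sup>2 + (a * mu / 2) / 2 * (norm (u - yn))\<^sup>2 + inner (a *\<^sub>R s) u)" for u
    unfolding Gam_def gam_def by (simp add: inner_diff_right algebra_simps)
  have quad: "Gam u = Gam xn + taun / 2 * (norm (u - xn))\<^sup>2" for u
    unfolding Gam_alt using quad_id[of taun tau "a * mu / 2" xn x yn "a *\<^sub>R s" u] taun taun_pos xn_eq
    by simp
  define G' where "G' = Gam xn"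
  have part1: "G' + taun / 2 * (norm (u - xn))\<^sup>2 \<le> (A + a) * phi u + 1/2 * (norm (u - x0))\<^sup>2" if u: "u \<in> H" for u
  proof -
    have "G' + taun / 2 * (norm (u - xn))\<^sup>2 = Gam u" using quad[of u] by (simp add: G'_def)
    also have "\<dots> \<le> A * phi u + 1/2 * (norm (u - x0))\<^sup>2 + a * phi u"
      unfolding Gam_def using G2[OF u] lm[OF u] a by (smt (verit) mult_left_mono)
    finally show ?thesis by (simp add: algebra_simps)
  qed
  have part2: "(A + a) * (phi yn + chi * Lt / 2 * nd) \<le> Gam u" for u
  proof -
    have "A * gam y \<le> G" using G1 lm[OF yH] A by (smt (verit) mult_left_mono)
    moreover have "A * (c + inner s (y - yn)) \<le> A * gam y" using gam_lin A by (intro mult_left_mono) auto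
    moreover have "a * (c + inner s (u - yn)) \<le> a * gam u" using gam_lin a by (intro mult_left_mono) auto
    ultimately have g1: "A * (c + inner s (y - yn)) + a * (c + inner s (u - yn)) + tau / 2 * (norm (u - x))\<^sup>2 \<le> Gam u"
      unfolding Gam_def by linarith
    have ip: "inner s ((A + a) *\<^sub>R xt) = inner s (A *\<^sub>R y + a *\<^sub>R x)" using xt_eq by simp
    have g2: "A * inner s (y - yn) + a * inner s (u - yn) = (A + a) * inner s (xt - yn) + inner (a *\<^sub>R s) (u - x)"
      using ip by (simp add: inner_diff_right inner_add_right algebra_simps)
    have g3: "inner s (xt - yn) = Lt * nd"
      unfolding sdef nd_def by (simp add: power2_norm_eq_inner norm_minus_commute[of yn xt] inner_commute)
    have g4: "- (norm (a *\<^sub>R s))\<^sup>2 / (2 * tau) \<le> inner (a *\<^sub>R s) (u - x) + tau / 2 * (norm (u - x))\<^sup>2"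
      by (rule quad_lb[OF tau])
    have g5: "(norm (a *\<^sub>R s))\<^sup>2 / (2 * tau) = (A + a) * Lt * nd / 2"
    proof -
      have "(norm (a *\<^sub>R s))\<^sup>2 = (Lt * a\<^sup>2) * Lt * nd"
        unfolding sdef nd_def using Lt by (simp add: power_mult_distrib norm_minus_commute[of yn xt] power2_eq_square)
      then show ?thesis unfolding aeq using tau by (simp add: field_simps)
    qed
    have g45: "- ((A + a) * Lt * nd / 2) \<le> inner (a *\<^sub>R s) (u - x) + tau / 2 * (norm (u - x))\<^sup>2"
      using g4 g5 by (metis minus_divide_left)
    have g6: "A * (c + inner s (y - yn)) + a * (c + inner s (u - yn)) = (A + a) * c + (A + a) * (Lt * nd) + inner (a *\<^sub>R s) (u - x)"
      using g2 g3 by (simp add: algebra_simps)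
    have "(A + a) * (phi yn + chi * Lt / 2 * nd) = (A + a) * c + (A + a) * (Lt * nd) + (- ((A + a) * Lt * nd / 2))"
      unfolding c_def by (simp add: field_simps)
    also have "\<dots> \<le> (A + a) * c + (A + a) * (Lt * nd) + (inner (a *\<^sub>R s) (u - x) + tau / 2 * (norm (u - x))\<^sup>2)"
      using g45 by (rule add_left_mono)
    also have "\<dots> = A * (c + inner s (y - yn)) + a * (c + inner s (u - yn)) + tau / 2 * (norm (u - x))\<^sup>2"
      unfolding g6 by (simp add: algebra_simps)
    finally show ?thesis using g1 by linarith
  qed
  show ?thesis
    using part1 part2[of xn] unfolding G'_def[symmetric] nd_def by blast
qed

end


lemma a_props:
  fixes Lt tau A :: real
  assumes Lt: "Lt > 0" and tau: "tau > 0" and A: "A \<ge> 0"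
    and a: "a = (tau + sqrt (tau\<^sup>2 + 4 * tau * A * Lt)) / (2 * Lt)"
  shows "a > 0 \<and> Lt * a\<^sup>2 = tau * (A + a)"
proof -
  define r where "r = sqrt (tau\<^sup>2 + 4 * tau * A * Lt)"
  have "0 \<le> tau * A" using tau A by simp
  have t1: "0 \<le> tau * A * Lt" using mult_nonneg_nonneg[OF \<open>0 \<le> tau * A\<close> less_imp_le[OF Lt]] .
  have "4 * tau * A * Lt = 4 * (tau * A * Lt)" by simp
  then have "0 \<le> 4 * tau * A * Lt" using t1 by (simp only:)
  then have nn: "0 \<le> tau\<^sup>2 + 4 * tau * A * Lt" by (metis add_nonneg_nonneg zero_le_power2)
  have r0: "r \<ge> 0" using nn by (simp add: r_def)
  have r2: "r\<^sup>2 = tau\<^sup>2 + 4 * tau * A * Lt" unfolding r_def using nn by simp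
  have a2: "2 * Lt * a = tau + r" using Lt by (simp add: a r_def[symmetric])
  have "2 * Lt * a > 0" using a2 tau r0 by linarith
  then have "a > 0" using Lt by (simp add: zero_less_mult_iff)
  moreover have "4 * Lt * (Lt * a\<^sup>2) = 4 * Lt * (tau * (A + a))"
  proof -
    have "4 * Lt * (Lt * a\<^sup>2) = (2 * Lt * a)\<^sup>2" by (simp add: power2_eq_square)
    also have "\<dots> = (tau + r)\<^sup>2" by (simp add: a2)
    also have "\<dots> = 2 * tau * (tau + r) + 4 * tau * A * Lt" using r2 by (simp add: power2_eq_square algebra_simps)
    also have "\<dots> = 4 * Lt * (tau * (A + a))" unfolding a2[symmetric] by (simp add: algebra_simps)
    finally show ?thesis .
  qed
  then have "Lt * a\<^sup>2 = tau * (A + a)" using Lt by simp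
  ultimately show ?thesis by simp
qed

lemma Q_sq:
  assumes "z \<ge> 0"
  shows "(2 * sqrt 2 * sqrt z)\<^sup>2 = 8 * z"
  using assms by (simp add: power_mult_distrib)

lemma growth:
  fixes Lt Lm mu A a tau Q :: real
  assumes Lt: "Lt > 0" "Lt \<le> Lm" and mu: "mu > 0" and A: "A \<ge> 0" and tau: "tau = 1 + mu * A / 2"
    and a: "a > 0" and aeq: "Lt * a\<^sup>2 = tau * (A + a)" and Q: "Q = 2 * sqrt 2 * sqrt (Lm / mu)"
  shows "a \<ge> 2 * A / Q"
proof -
  have Lm: "Lm > 0" using Lt by simp
  have Qp: "Q > 0" using Q Lm mu by simp
  have Q2: "Q\<^sup>2 = 8 * (Lm / mu)" using Q Q_sq[of "Lm / mu"] Lm mu by simp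
  have "(2 * A / Q)\<^sup>2 = mu * A\<^sup>2 / (2 * Lm)" using Q2 Qp mu Lm by (simp add: power_divide field_simps)
  also have "\<dots> \<le> mu * A\<^sup>2 / (2 * Lt)"
    using Lt mu A by (intro divide_left_mono) (auto intro: mult_pos_pos)
  also have "\<dots> \<le> a\<^sup>2"
  proof -
    have e: "tau * (A + a) = mu * A\<^sup>2 / 2 + (A + a + mu * A * a / 2)" by (simp add: tau power2_eq_square algebra_simps)
    have "0 \<le> A + a + mu * A * a / 2" using A a mu by (intro add_nonneg_nonneg) auto
    then have "mu * A\<^sup>2 / 2 \<le> tau * (A + a)" unfolding e by linarith
    then have "mu * A\<^sup>2 / 2 \<le> Lt * a\<^sup>2" using aeq by simp
    then show ?thesis using Lt by (simp add: field_simps)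
  qed
  finally have sq: "(2 * A / Q)\<^sup>2 \<le> a\<^sup>2" .
  show ?thesis by (rule power2_le_imp_le[OF sq]) (use a in simp)
qed

lemma ln_bound:
  fixes q :: real assumes "q > 0"
  shows "q / (1 + q) \<le> ln (1 + q)"
proof -
  have "ln (1 / (1 + q)) \<le> 1 / (1 + q) - 1" using assms by (intro ln_le_minus_one) auto
  moreover have "ln (1 / (1 + q)) = - ln (1 + q)" using assms by (simp add: ln_div)
  moreover have "1 / (1 + q) - 1 = - (q / (1 + q))" using assms by (simp add: field_simps)
  ultimately show ?thesis by linarith
qed

lemma termination_pow:
  fixes Q T :: real and n :: nat
  assumes Q: "Q > 0" and n: "real n \<ge> (1 + Q) * logp 1 T"
  shows "T \<le> (1 + 2 / Q) ^ n"
proof -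
  have "2 / Q > 0" using Q by simp
  then have b: "1 + 2 / Q > 0" by linarith
  show ?thesis
proof (cases "T \<le> 0")
  case True then show ?thesis using b by (smt (verit) zero_less_power)
next
  case False
  have lq: "1 \<le> (1 + Q) * ln (1 + 2 / Q)"
  proof -
    have "(2 / Q) / (1 + 2 / Q) \<le> ln (1 + 2 / Q)" using Q by (intro ln_bound) auto
    moreover have "(2 / Q) / (1 + 2 / Q) = 2 / (Q + 2)" using Q by (simp add: field_simps)
    ultimately have "(1 + Q) * (2 / (Q + 2)) \<le> (1 + Q) * ln (1 + 2 / Q)" using Q by (intro mult_left_mono) auto
    moreover have "1 \<le> (1 + Q) * (2 / (Q + 2))" using Q by (simp add: field_simps)
    ultimately show ?thesis by linarith
  qed
  have lp: "ln T \<le> logp 1 T" "1 \<le> logp 1 T" by (auto simp: logp_def)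
  have "ln T \<le> logp 1 T * 1" using lp by simp
  also have "\<dots> \<le> logp 1 T * ((1 + Q) * ln (1 + 2 / Q))" using lq lp by (intro mult_left_mono) auto
  also have "\<dots> = ((1 + Q) * logp 1 T) * ln (1 + 2 / Q)" by simp
  also have "\<dots> \<le> real n * ln (1 + 2 / Q)"
    using n Q by (intro mult_right_mono) auto
  also have "\<dots> = ln ((1 + 2 / Q) ^ n)" using b by (simp add: ln_realpow)
  finally have "ln T \<le> ln ((1 + 2 / Q) ^ n)" .
  then show ?thesis using False b by simp
qed
qed

context ctx begin

lemma vbound: "norm (gf yn - gf xt + Lt *\<^sub>R (xt - yn)) \<le> (Lbar + Lt) * norm (yn - xt)" if "Lt \<ge> 0"
proof -
  have "norm (gf yn - gf xt + Lt *\<^sub>R (xt - yn)) \<le> norm (gf yn - gf xt) + norm (Lt *\<^sub>R (xt - yn))"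
    by (rule norm_triangle_ineq)
  also have "\<dots> \<le> Lbar * norm (yn - xt) + Lt * norm (yn - xt)"
    using f_lip[of xt yn] that by (simp add: norm_minus_commute)
  finally show ?thesis by (simp add: algebra_simps)
qed

definition "kappa = 2 * beta / (1 - chi)"
definition "Lmx Ml = max Ml (kappa * Lbar)"
definition "Qf mu Ml = 2 * sqrt 2 * sqrt (Lmx Ml / mu)"
definition "Cf x0 = 8 / mubar * (phi x0 - phi zstar)"
definition "Tf x0 Ml = Cf x0 * (Lbar + Lmx Ml)\<^sup>2 / (chi * eps\<^sup>2)"
definition "S0 mu x0 Ml = ceiling ((1 + Qf mu Ml) * logp 1 (Tf x0 Ml) + 1)"
definition "Fmax Ml = ceiling (logp 0 (2 * Lbar / ((1 - chi) * Ml)) / ln beta)"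

lemma dist_C:
  assumes "w \<in> H" "x0 \<in> H" "phi w \<le> phi x0"
  shows "(norm (w - x0))\<^sup>2 \<le> Cf x0"
proof -
  have a: "mubar / 2 * (norm (w - zstar))\<^sup>2 \<le> phi x0 - phi zstar" using sc_dist[OF assms(1)] assms(3) by linarith
  have b: "mubar / 2 * (norm (x0 - zstar))\<^sup>2 \<le> phi x0 - phi zstar" using sc_dist[OF assms(2)] by linarith
  have "norm (w - x0) \<le> norm (w - zstar) + norm (x0 - zstar)"
    using norm_triangle_ineq4[of "w - zstar" "x0 - zstar"] by simp
  then have "(norm (w - x0))\<^sup>2 \<le> (norm (w - zstar) + norm (x0 - zstar))\<^sup>2"
    by (intro power_mono) auto
  also have "\<dots> \<le> 2 * (norm (w - zstar))\<^sup>2 + 2 * (norm (x0 - zstar))\<^sup>2"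
    using zero_le_power2[of "norm (w - zstar) - norm (x0 - zstar)"] by (simp add: power2_diff power2_sum)
  also have "\<dots> \<le> Cf x0"
    using a b mubar_pos unfolding Cf_def by (simp add: field_simps)
  finally show ?thesis .
qed

end


lemma stop_when:
  fixes v d :: "'a::real_normed_vector"
  assumes v: "norm v \<le> Z * norm d" and Z: "0 \<le> Z" and c: "chi * P * (norm d)\<^sup>2 \<le> C"
    and T: "C * Z\<^sup>2 / (chi * eps\<^sup>2) \<le> P" and P: "P > 0" and chi: "chi > 0" and eps: "eps > 0"
  shows "norm v \<le> eps"
proof -
  have "Z\<^sup>2 * (chi * P * (norm d)\<^sup>2) \<le> Z\<^sup>2 * C" using c by (intro mult_left_mono) auto
  then have "Z\<^sup>2 * (norm d)\<^sup>2 * (chi * P) \<le> Z\<^sup>2 * C" by (simp add: algebra_simps)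
  also have "\<dots> = chi * eps\<^sup>2 * (C * Z\<^sup>2 / (chi * eps\<^sup>2))" using chi eps by (simp add: field_simps)
  also have "\<dots> \<le> chi * eps\<^sup>2 * P" using T chi eps by (intro mult_left_mono) auto
  finally have "Z\<^sup>2 * (norm d)\<^sup>2 * (chi * P) \<le> eps\<^sup>2 * (chi * P)" by (simp add: algebra_simps)
  then have zd: "Z\<^sup>2 * (norm d)\<^sup>2 \<le> eps\<^sup>2" using chi P by (simp add: mult_le_cancel_right_pos)
  have "(norm v)\<^sup>2 \<le> (Z * norm d)\<^sup>2" using v by (intro power_mono) auto
  also have "\<dots> = Z\<^sup>2 * (norm d)\<^sup>2" by (simp add: power_mult_distrib)
  finally have "(norm v)\<^sup>2 \<le> eps\<^sup>2" using zd by linarith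
  then show ?thesis by (rule power2_le_imp_le) (use eps in auto)
qed

context ctx begin

definition cinv :: "real \<Rightarrow> 'a \<Rightarrow> real \<Rightarrow> nat \<Rightarrow> 'a cstate \<Rightarrow> bool" where
"cinv mu x0 Ml k st = (case st of
   CRun Lt A tau x y xi \<Rightarrow>
     (\<exists>F s. k = F + s \<and> Lt = Ml * beta ^ F \<and> (F > 0 \<longrightarrow> Ml * beta ^ (F - 1) < 2 * Lbar / (1 - chi))
        \<and> (s = 0 \<longrightarrow> A = 0) \<and> (s > 0 \<longrightarrow> (1 + 2 / Qf mu Ml) ^ (s - 1) \<le> A * Lt) \<and> int s < S0 mu x0 Ml)
     \<and> 0 \<le> A \<and> tau = 1 + mu * A / 2 \<and> y \<in> H \<and> xi \<in> H \<and> phi xi \<le> phi x0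
     \<and> (mu \<le> mubar \<longrightarrow> (\<exists>G. A * phi y \<le> G \<and> (\<forall>u\<in>H. G + tau / 2 * (norm (u - x))\<^sup>2 \<le> A * phi u + 1/2 * (norm (u - x0))\<^sup>2)))
 | CRestart z L \<Rightarrow> z \<in> H \<and> phi z \<le> phi x0 \<and> Ml \<le> L \<and> L \<le> Lmx Ml \<and> \<not> mu \<le> mubar
 | CStop y v xi L \<Rightarrow> y \<in> H \<and> xi \<in> H \<and> phi xi \<le> phi x0 \<and> phi xi \<le> phi y \<and> Ml \<le> L \<and> L \<le> Lmx Ml
       \<and> v - gf y \<in> subdiff h H y \<and> norm v \<le> eps)"

lemma Lt_bounds:
  assumes Ml: "Ml > 0" and Lt: "Lt = Ml * beta ^ F" and F: "F > 0 \<longrightarrow> Ml * beta ^ (F - 1) < 2 * Lbar / (1 - chi)"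
  shows "Ml \<le> Lt \<and> Lt \<le> Lmx Ml"
proof -
  have "1 \<le> beta ^ F" using beta by simp
  then have "Ml \<le> Lt" using Ml Lt by simp
  moreover have "Lt \<le> Lmx Ml"
  proof (cases F)
    case 0 then show ?thesis using Lt by (simp add: Lmx_def)
  next
    case (Suc G)
    have "Lt = beta * (Ml * beta ^ G)" using Lt Suc by simp
    also have "\<dots> \<le> beta * (2 * Lbar / (1 - chi))" using F Suc beta by (intro mult_left_mono) auto
    also have "\<dots> = kappa * Lbar" by (simp add: kappa_def)
    finally show ?thesis by (simp add: Lmx_def)
  qed
  ultimately show ?thesis by simp
qed

lemma Qf_pos:
  assumes "mu > 0" "Ml > 0"
  shows "Qf mu Ml > 0"
  using assms unfolding Qf_def Lmx_def by simp

lemma S0_pos: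
  assumes "mu > 0" "Ml > 0"
  shows "1 \<le> S0 mu x0 Ml"
proof -
  have "0 \<le> Qf mu Ml" using Qf_pos[OF assms] by simp
  moreover have "1 \<le> logp 1 (Tf x0 Ml)" by (simp add: logp_def)
  ultimately have "0 \<le> (1 + Qf mu Ml) * logp 1 (Tf x0 Ml)" by simp
  then have "(1::real) \<le> (1 + Qf mu Ml) * logp 1 (Tf x0 Ml) + 1" by simp
  then have "ceiling (1::real) \<le> ceiling ((1 + Qf mu Ml) * logp 1 (Tf x0 Ml) + 1)" by (rule ceiling_mono)
  then show ?thesis unfolding S0_def ceiling_one .
qed

lemma inv0:
  assumes "mu > 0" "Ml > 0" "x0 \<in> H"
  shows "cinv mu x0 Ml 0 (CRun Ml 0 1 x0 x0 x0)"
proof -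
  have "\<exists>F s. (0::nat) = F + s \<and> Ml = Ml * beta ^ F \<and> (F > 0 \<longrightarrow> Ml * beta ^ (F - 1) < 2 * Lbar / (1 - chi))
        \<and> (s = 0 \<longrightarrow> (0::real) = 0) \<and> (s > 0 \<longrightarrow> (1 + 2 / Qf mu Ml) ^ (s - 1) \<le> 0 * Ml) \<and> int s < S0 mu x0 Ml"
    using S0_pos[OF assms(1,2), of x0] by (intro exI[of _ 0]) simp
  note f1 = this
  have "\<exists>G. 0 * phi x0 \<le> G \<and> (\<forall>u\<in>H. G + 1 / 2 * (norm (u - x0))\<^sup>2 \<le> 0 * phi u + 1/2 * (norm (u - x0))\<^sup>2)"
    by (intro exI[of _ 0]) simp
  note f2 = this
  show ?thesis unfolding cinv_def cstate.case
    by (intro conjI impI; (rule f1 | rule f2 | simp add: assms(3)))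
qed

lemma inv_step:
  assumes mu: "mu > 0" and Ml: "Ml > 0" and x0: "x0 \<in> H" and I: "cinv mu x0 Ml k st"
  shows "cinv mu x0 Ml (Suc k) (cycle_step f gf h H chi beta mu x0 eps st)"
proof (cases st)
  case (CRestart z L) then show ?thesis using I by (simp add: cycle_step_def cinv_def)
next
  case (CStop y v xi L) then show ?thesis using I by (simp add: cycle_step_def cinv_def)
next
  case (CRun Lt A tau x y xi)
  have I': "(\<exists>F s. k = F + s \<and> Lt = Ml * beta ^ F \<and> (F > 0 \<longrightarrow> Ml * beta ^ (F - 1) < 2 * Lbar / (1 - chi))
        \<and> (s = 0 \<longrightarrow> A = 0) \<and> (s > 0 \<longrightarrow> (1 + 2 / Qf mu Ml) ^ (s - 1) \<le> A * Lt) \<and> int s < S0 mu x0 Ml)"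
     and A0: "0 \<le> A" and tau: "tau = 1 + mu * A / 2" and yH: "y \<in> H" and xiH: "xi \<in> H" and xiphi: "phi xi \<le> phi x0"
     and GI: "mu \<le> mubar \<longrightarrow> (\<exists>G. A * phi y \<le> G \<and> (\<forall>u\<in>H. G + tau / 2 * (norm (u - x))\<^sup>2 \<le> A * phi u + 1/2 * (norm (u - x0))\<^sup>2))"
    using I unfolding CRun cinv_def cstate.case by blast+
  obtain F s where k: "k = F + s" and Lt: "Lt = Ml * beta ^ F" and FF: "F > 0 \<longrightarrow> Ml * beta ^ (F - 1) < 2 * Lbar / (1 - chi)"
    and s0: "s = 0 \<longrightarrow> A = 0" and sp: "s > 0 \<longrightarrow> (1 + 2 / Qf mu Ml) ^ (s - 1) \<le> A * Lt" and sS: "int s < S0 mu x0 Ml"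
    using I' by blast
  have Ltb: "Ml \<le> Lt" "Lt \<le> Lmx Ml" using Lt_bounds[OF Ml Lt FF] by auto
  have Ltp: "Lt > 0" using Ltb Ml by simp
  have taup: "tau > 0" using tau mu A0 by (smt (verit) divide_nonneg_pos mult_nonneg_nonneg)
  define a where "a = (tau + sqrt (tau\<^sup>2 + 4 * tau * A * Lt)) / (2 * Lt)"
  define xt where "xt = (1 / (A + a)) *\<^sub>R (A *\<^sub>R y + a *\<^sub>R x)"
  define yn where "yn = prox_step f gf h H Lt xt"
  have apos: "a > 0" and aeq: "Lt * a\<^sup>2 = tau * (A + a)" using a_props[OF Ltp taup A0 a_def] by auto
  have Apos: "A + a > 0" using A0 apos by simp
  have xt_eq: "(A + a) *\<^sub>R xt = A *\<^sub>R y + a *\<^sub>R x" using Apos by (simp add: xt_def)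
  have ynH: "yn \<in> H" using prox_prop[OF Ltp] by (simp add: yn_def)
  have sg0: "\<And>u. u \<in> H \<Longrightarrow> h yn + inner (Lt *\<^sub>R (xt - yn) - gf xt) (u - yn) \<le> h u"
    using prox_subgrad[OF Ltp yn_def] by blast
  define xin where "xin = (if f yn + h yn \<le> f xi + h xi then yn else xi)"
  define An where "An = A + a"
  define taun where "taun = tau + a * mu / 2"
  define sv where "sv = Lt *\<^sub>R (xt - yn)"
  define xn where "xn = (1 / taun) *\<^sub>R ((mu * a / 2) *\<^sub>R yn + tau *\<^sub>R x - a *\<^sub>R sv)"
  define v where "v = gf yn - gf xt + sv"
  have st_full: "cycle_step f gf h H chi beta mu x0 eps st =
    (if f yn \<le> lin_f f gf yn xt + (1 - chi) * Lt / 4 * (norm (yn - xt))\<^sup>2 then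
      (if (norm (xin - x0))\<^sup>2 < chi * An * Lt * (norm (yn - xt))\<^sup>2 then CRestart xin Lt
       else if norm v \<le> eps then CStop yn v xin Lt
       else CRun Lt An taun xn yn xin)
     else CRun (beta * Lt) A tau x y xi)"
    unfolding CRun cycle_step_def Let_def cstate.case a_def xt_def yn_def xin_def An_def taun_def sv_def xn_def v_def
    by (rule refl)
  show ?thesis
  proof (cases "f yn \<le> lin_f f gf yn xt + (1 - chi) * Lt / 4 * (norm (yn - xt))\<^sup>2")
    case False
    have st: "cycle_step f gf h H chi beta mu x0 eps st = CRun (beta * Lt) A tau x y xi"
      using st_full by (simp only: if_not_P[OF False])
    have Lsmall: "Lt < 2 * Lbar / (1 - chi)"
    proof (rule ccontr)
      assume "\<not> Lt < 2 * Lbar / (1 - chi)"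
      then have "2 * Lbar \<le> Lt * (1 - chi)" using chi1 by (simp add: field_simps)
      then have "Lbar / 2 \<le> (1 - chi) * Lt / 4" by (simp add: field_simps)
      then have "Lbar / 2 * (norm (yn - xt))\<^sup>2 \<le> (1 - chi) * Lt / 4 * (norm (yn - xt))\<^sup>2" by (intro mult_right_mono) auto
      then show False using False descent[of yn xt] unfolding lin_f_def by linarith
    qed
    have "cinv mu x0 Ml (Suc k) (CRun (beta * Lt) A tau x y xi)"
      unfolding cinv_def cstate.case
    proof (intro conjI)
      have "(1 + 2 / Qf mu Ml) ^ (s - 1) \<le> A * (beta * Lt)" if "s > 0"
      proof -
        have "A * Lt \<le> A * (beta * Lt)" using A0 Ltp beta by (intro mult_left_mono) auto
        then show ?thesis using sp that by linarith
      qed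
      then show "\<exists>F s. Suc k = F + s \<and> beta * Lt = Ml * beta ^ F \<and> (F > 0 \<longrightarrow> Ml * beta ^ (F - 1) < 2 * Lbar / (1 - chi))
        \<and> (s = 0 \<longrightarrow> A = 0) \<and> (s > 0 \<longrightarrow> (1 + 2 / Qf mu Ml) ^ (s - 1) \<le> A * (beta * Lt)) \<and> int s < S0 mu x0 Ml"
        using k Lt Lsmall s0 sS by (intro exI[of _ "Suc F"] exI[of _ s]) auto
    qed (use A0 tau yH xiH xiphi GI in auto)
    then show ?thesis using st by simp
  next
    case True
    have st: "cycle_step f gf h H chi beta mu x0 eps st =
      (if (norm (xin - x0))\<^sup>2 < chi * An * Lt * (norm (yn - xt))\<^sup>2 then CRestart xin Lt
       else if norm v \<le> eps then CStop yn v xin Lt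
       else CRun Lt An taun xn yn xin)"
      using st_full by (simp only: if_P[OF True])
    have xinH: "xin \<in> H" using ynH xiH by (simp add: xin_def)
    have xin1: "phi xin \<le> phi x0" and xin2: "phi xin \<le> phi yn"
      using xiphi by (auto simp: xin_def phi_def)
    have vb: "norm v \<le> (Lbar + Lmx Ml) * norm (yn - xt)"
    proof -
      have "norm v \<le> (Lbar + Lt) * norm (yn - xt)" unfolding v_def sv_def using vbound Ltp by simp
      also have "\<dots> \<le> (Lbar + Lmx Ml) * norm (yn - xt)" using Ltb by (intro mult_right_mono) auto
      finally show ?thesis .
    qed
    have Zp: "0 \<le> Lbar + Lmx Ml" using Lbar_pos Ltb Ltp by linarith
    have grow: "(1 + 2 / Qf mu Ml) ^ s \<le> An * Lt"
    proof (cases "s = 0")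
      case True
      then have "A = 0" using s0 by simp
      then have "tau = 1" using tau by simp
      then have "a = 1 / Lt" using \<open>A = 0\<close> Ltp by (simp add: a_def)
      then show ?thesis using True \<open>A = 0\<close> Ltp by (simp add: An_def)
    next
      case False
      have Qp: "Qf mu Ml > 0" by (rule Qf_pos[OF mu Ml])
      have ga: "a \<ge> 2 * A / Qf mu Ml"
        by (rule growth[OF Ltp Ltb(2) mu A0 tau apos aeq]) (simp add: Qf_def)
      have "(1 + 2 / Qf mu Ml) ^ s = (1 + 2 / Qf mu Ml) * (1 + 2 / Qf mu Ml) ^ (s - 1)"
        using False by (metis Suc_pred' neq0_conv power_Suc)
      also have "\<dots> \<le> (1 + 2 / Qf mu Ml) * (A * Lt)"
        using sp False Qp by (intro mult_left_mono) auto
      also have "\<dots> = A * Lt + (2 * A / Qf mu Ml) * Lt" by (simp add: algebra_simps)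
      also have "\<dots> \<le> A * Lt + a * Lt" using ga Ltp by (intro add_left_mono mult_right_mono) auto
      also have "\<dots> = An * Lt" by (simp add: An_def algebra_simps)
      finally show ?thesis .
    qed
    have sgv: "v - gf yn \<in> subdiff h H yn"
    proof -
      have "v - gf yn = Lt *\<^sub>R (xt - yn) - gf xt" by (simp add: v_def sv_def)
      then show ?thesis unfolding subdiff_def using ynH sg0 by simp
    qed
    have Gpart: "mu \<le> mubar \<Longrightarrow> \<exists>G'. An * (phi yn + chi * Lt / 2 * (norm (yn - xt))\<^sup>2) \<le> G'
           \<and> (\<forall>u\<in>H. G' + taun / 2 * (norm (u - xn))\<^sup>2 \<le> An * phi u + 1/2 * (norm (u - x0))\<^sup>2)"
    proof -
      assume mm: "mu \<le> mubar"
      obtain G where G1: "A * phi y \<le> G" and G2: "\<And>u. u \<in> H \<Longrightarrow> G + tau / 2 * (norm (u - x))\<^sup>2 \<le> A * phi u + 1/2 * (norm (u - x0))\<^sup>2"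
        using GI mm by blast
      show ?thesis unfolding An_def
        by (rule G_step[OF _ mm Ltp A0 taup apos aeq xt_eq yH ynH sv_def _ True G1 G2 taun_def xn_def])
           (use mu sg0 sv_def in auto)
    qed
    have norestart: "\<not> (norm (xin - x0))\<^sup>2 < chi * An * Lt * (norm (yn - xt))\<^sup>2" if mm: "mu \<le> mubar"
    proof -
      obtain G' where g1: "An * (phi yn + chi * Lt / 2 * (norm (yn - xt))\<^sup>2) \<le> G'"
        and g2: "\<forall>u\<in>H. G' + taun / 2 * (norm (u - xn))\<^sup>2 \<le> An * phi u + 1/2 * (norm (u - x0))\<^sup>2"
        using Gpart[OF mm] by blast
      have taunp: "taun \<ge> 0" using taup apos mu by (simp add: taun_def)
      have "0 \<le> taun / 2 * (norm (xin - xn))\<^sup>2" using taunp by simp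
      moreover have "An * phi xin \<le> An * phi yn" using xin2 Apos by (simp add: An_def)
      ultimately have "An * (phi yn + chi * Lt / 2 * (norm (yn - xt))\<^sup>2) \<le> An * phi yn + 1/2 * (norm (xin - x0))\<^sup>2"
        using g1 g2 xinH by fastforce
      then have "chi * An * Lt * (norm (yn - xt))\<^sup>2 \<le> (norm (xin - x0))\<^sup>2"
        by (simp add: algebra_simps)
      then show ?thesis by linarith
    qed
    show ?thesis
    proof (cases "(norm (xin - x0))\<^sup>2 < chi * An * Lt * (norm (yn - xt))\<^sup>2")
      case True
      then have "\<not> mu \<le> mubar" using norestart by blast
      then show ?thesis using True st xinH xin1 Ltb by (simp add: cinv_def)
    next
      case nr: False
      have cC: "chi * (An * Lt) * (norm (yn - xt))\<^sup>2 \<le> Cf x0"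
        using nr dist_C[OF xinH x0 xin1] by (simp add: mult.assoc)
      show ?thesis
      proof (cases "norm v \<le> eps")
        case True
        then show ?thesis using nr st xinH xin1 xin2 ynH Ltb sgv by (simp add: cinv_def)
      next
        case nv: False
        have sS': "int (Suc s) < S0 mu x0 Ml"
        proof (rule ccontr)
          assume "\<not> int (Suc s) < S0 mu x0 Ml"
          then have "S0 mu x0 Ml \<le> int (Suc s)" by simp
          then have "(1 + Qf mu Ml) * logp 1 (Tf x0 Ml) + 1 \<le> of_int (int (Suc s))"
            unfolding S0_def ceiling_le_iff .
          then have "(1 + Qf mu Ml) * logp 1 (Tf x0 Ml) \<le> real s" by simp
          then have "Tf x0 Ml \<le> (1 + 2 / Qf mu Ml) ^ s" by (rule termination_pow[OF Qf_pos[OF mu Ml]])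
          then have TP: "Tf x0 Ml \<le> An * Lt" using grow by linarith
          have "norm v \<le> eps"
            by (rule stop_when[OF vb Zp cC _ _ chi0 eps]) (use TP Apos Ltp in \<open>auto simp: Tf_def An_def\<close>)
          then show False using nv by simp
        qed
        have "cinv mu x0 Ml (Suc k) (CRun Lt An taun xn yn xin)"
          unfolding cinv_def cstate.case
        proof (intro conjI)
          show "\<exists>F s. Suc k = F + s \<and> Lt = Ml * beta ^ F \<and> (F > 0 \<longrightarrow> Ml * beta ^ (F - 1) < 2 * Lbar / (1 - chi))
            \<and> (s = 0 \<longrightarrow> An = 0) \<and> (s > 0 \<longrightarrow> (1 + 2 / Qf mu Ml) ^ (s - 1) \<le> An * Lt) \<and> int s < S0 mu x0 Ml"
            using k Lt FF grow sS' by (intro exI[of _ F] exI[of _ "Suc s"]) auto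
          show "0 \<le> An" using Apos by (simp add: An_def)
          show "taun = 1 + mu * An / 2" by (simp add: taun_def An_def tau algebra_simps)
          show "mu \<le> mubar \<longrightarrow> (\<exists>G. An * phi yn \<le> G \<and> (\<forall>u\<in>H. G + taun / 2 * (norm (u - xn))\<^sup>2 \<le> An * phi u + 1/2 * (norm (u - x0))\<^sup>2))"
          proof
            assume mm: "mu \<le> mubar"
            obtain G' where g1: "An * (phi yn + chi * Lt / 2 * (norm (yn - xt))\<^sup>2) \<le> G'"
              and g2: "\<forall>u\<in>H. G' + taun / 2 * (norm (u - xn))\<^sup>2 \<le> An * phi u + 1/2 * (norm (u - x0))\<^sup>2"
              using Gpart[OF mm] by blast
            have "0 \<le> An * (chi * Lt / 2 * (norm (yn - xt))\<^sup>2)" using Apos Ltp chi0 by (simp add: An_def)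
            then have "An * phi yn \<le> G'" using g1 by (simp add: algebra_simps)
            then show "\<exists>G. An * phi yn \<le> G \<and> (\<forall>u\<in>H. G + taun / 2 * (norm (u - xn))\<^sup>2 \<le> An * phi u + 1/2 * (norm (u - x0))\<^sup>2)"
              using g2 by blast
          qed
        qed (use ynH xinH xin1 in auto)
        then show ?thesis using st nr nv by simp
      qed
    qed
  qed
qed

lemma inv_run:
  assumes "mu > 0" "Ml > 0" "x0 \<in> H"
  shows "cinv mu x0 Ml k (cycle_run f gf h H chi beta eps mu x0 Ml k)"
proof (induction k)
  case 0 then show ?case using inv0[OF assms] by (simp add: cycle_run_def)
next
  case (Suc k)
  then show ?case using inv_step[OF assms Suc] by (simp add: cycle_run_def)
qed

lemma Fmax_nonneg: "0 \<le> Fmax Ml"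
proof -
  have "0 \<le> logp 0 (2 * Lbar / ((1 - chi) * Ml)) / ln beta" using beta by (simp add: logp_def)
  then show ?thesis unfolding Fmax_def by simp
qed

lemma run_bound:
  assumes Ml: "Ml > 0" and I: "cinv mu x0 Ml k (CRun Lt A tau x y xi)"
  shows "int k \<le> Fmax Ml + S0 mu x0 Ml - 1"
proof -
  obtain F s where k: "k = F + s" and FF: "F > 0 \<longrightarrow> Ml * beta ^ (F - 1) < 2 * Lbar / (1 - chi)"
    and sS: "int s < S0 mu x0 Ml"
    using I unfolding cinv_def cstate.case by blast
  have "int F \<le> Fmax Ml"
  proof (cases "F = 0")
    case True then show ?thesis using Fmax_nonneg by simp
  next
    case False
    have lb: "ln beta > 0" using beta by simp
    have c0: "1 - chi > 0" using chi1 by simp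
    have c1: "(1 - chi) * Ml > 0" using chi1 Ml by simp
    have "Ml * beta ^ (F - 1) < 2 * Lbar / (1 - chi)" using FF False by simp
    then have "Ml * beta ^ (F - 1) * (1 - chi) < 2 * Lbar" using c0 by (simp add: pos_less_divide_eq)
    then have "beta ^ (F - 1) * ((1 - chi) * Ml) < 2 * Lbar" by (simp add: algebra_simps)
    then have "beta ^ (F - 1) < 2 * Lbar / ((1 - chi) * Ml)" using c1 by (simp add: pos_less_divide_eq)
    then have "ln (beta ^ (F - 1)) < ln (2 * Lbar / ((1 - chi) * Ml))"
      using beta c1 Lbar_pos by (intro ln_less_cancel_iff[THEN iffD2]) auto
    then have "real (F - 1) * ln beta < logp 0 (2 * Lbar / ((1 - chi) * Ml))"
      using beta by (simp add: ln_realpow logp_def)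
    then have "real (F - 1) < logp 0 (2 * Lbar / ((1 - chi) * Ml)) / ln beta"
      using lb by (simp add: field_simps)
    also have "\<dots> \<le> of_int (Fmax Ml)" unfolding Fmax_def by (rule le_of_int_ceiling)
    finally have "int (F - 1) < Fmax Ml" by linarith
    then show ?thesis using False by linarith
  qed
  then show ?thesis using k sS by linarith
qed

lemma main:
  fixes z :: "nat \<Rightarrow> 'a" and Mbar Mlow mu :: "nat \<Rightarrow> real" and l :: nat
  assumes z0: "z 0 \<in> H" and Mbar0: "Mbar 0 = M0" and M0: "M0 > 0" and mu_0: "mu 0 > 0" and l: "l \<ge> 1"
    and Mlow_range: "\<And>i. 1 \<le> i \<Longrightarrow> i \<le> l \<Longrightarrow>
           max (Mbar (i - 1) / 4) (Mbar 0) \<le> Mlow i \<and> Mlow i \<le> Mbar (i - 1)"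
    and prev_restart: "\<And>i. 1 \<le> i \<Longrightarrow> i < l \<Longrightarrow>
           (\<exists>k. cycle_run f gf h H chi beta eps (mu (i - 1)) (z (i - 1)) (Mlow i) k
                  = CRestart (z i) (Mbar i)) \<and> mu i = mu (i - 1) / 2"
    and run: "run = cycle_run f gf h H chi beta eps (mu (l - 1)) (z (l - 1)) (Mlow l)"
  shows "(\<exists>k. int k \<le> Fmax (Mlow l) + S0 (mu (l - 1)) (z (l - 1)) (Mlow l)
              \<and> (\<forall>Lt A tau x y xi. run k \<noteq> CRun Lt A tau x y xi))
       \<and> (\<forall>k y v xi L. run k = CStop y v xi L \<longrightarrow>
            phi xi \<le> min (phi (z 0)) (phi y)
            \<and> M0 \<le> L \<and> L \<le> max M0 (kappa * Lbar)
            \<and> v - gf y \<in> subdiff h H y \<and> norm v \<le> eps)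
       \<and> (0 < mu (l - 1) \<and> mu (l - 1) \<le> mubar \<longrightarrow>
            (\<forall>k z' L'. run k \<noteq> CRestart z' L')
            \<and> (\<exists>k y v xi L. int k \<le> Fmax (Mlow l) + S0 (mu (l - 1)) (z (l - 1)) (Mlow l) \<and> run k = CStop y v xi L))"
proof -
  have Mlow_pos: "Mlow i \<ge> M0" if "1 \<le> i" "i \<le> l" for i
    using Mlow_range[OF that] Mbar0 by simp
  have prev: "z i \<in> H \<and> phi (z i) \<le> phi (z 0) \<and> Mbar i \<le> max M0 (kappa * Lbar) \<and> mu i > 0" if "i < l" for i
    using that
  proof (induction i)
    case 0 then show ?case using z0 Mbar0 mu_0 by simp
  next
    case (Suc i)
    have IH: "z i \<in> H" "phi (z i) \<le> phi (z 0)" "Mbar i \<le> max M0 (kappa * Lbar)" "mu i > 0"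
      using Suc by auto
    obtain k where rk: "cycle_run f gf h H chi beta eps (mu i) (z i) (Mlow (Suc i)) k = CRestart (z (Suc i)) (Mbar (Suc i))"
      and mus: "mu (Suc i) = mu i / 2"
      using prev_restart[of "Suc i"] Suc.prems by auto
    have Mp: "Mlow (Suc i) > 0" using Mlow_pos[of "Suc i"] Suc.prems M0 by simp
    have "cinv (mu i) (z i) (Mlow (Suc i)) k (CRestart (z (Suc i)) (Mbar (Suc i)))"
      using inv_run[OF IH(4) Mp IH(1), of k] rk by simp
    then have c: "z (Suc i) \<in> H" "phi (z (Suc i)) \<le> phi (z i)" "Mbar (Suc i) \<le> Lmx (Mlow (Suc i))"
      unfolding cinv_def by auto
    have "Mlow (Suc i) \<le> Mbar i" using Mlow_range[of "Suc i"] Suc.prems by simp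
    then have "Mbar (Suc i) \<le> max M0 (kappa * Lbar)" using c(3) IH(3) unfolding Lmx_def by linarith
    then show ?case using c IH mus by simp
  qed
  define x0 where "x0 = z (l - 1)"
  define m where "m = mu (l - 1)"
  define Ml where "Ml = Mlow l"
  have P: "x0 \<in> H" "phi x0 \<le> phi (z 0)" "Mbar (l - 1) \<le> max M0 (kappa * Lbar)" "m > 0"
    using prev[of "l - 1"] l by (auto simp: x0_def m_def)
  have Ml1: "M0 \<le> Ml" using Mlow_pos[of l] l by (simp add: Ml_def)
  have Ml2: "Ml \<le> max M0 (kappa * Lbar)" using Mlow_range[of l] l P(3) by (simp add: Ml_def)
  have Mlp: "Ml > 0" using Ml1 M0 by simp
  have runI: "cinv m x0 Ml k (run k)" for k
    using inv_run[OF P(4) Mlp P(1)] by (simp add: run x0_def m_def Ml_def)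
  define K where "K = nat (Fmax Ml + S0 m x0 Ml)"
  have KK: "int K = Fmax Ml + S0 m x0 Ml" using Fmax_nonneg S0_pos[OF P(4) Mlp, of x0] by (simp add: K_def)
  have notrun: "\<forall>Lt A tau x y xi. run K \<noteq> CRun Lt A tau x y xi"
  proof (intro allI notI)
    fix Lt A tau x y xi assume "run K = CRun Lt A tau x y xi"
    then have "int K \<le> Fmax Ml + S0 m x0 Ml - 1" using run_bound[OF Mlp] runI[of K] by simp
    then show False using KK by simp
  qed
  have partb: "\<forall>k y v xi L. run k = CStop y v xi L \<longrightarrow>
            phi xi \<le> min (phi (z 0)) (phi y)
            \<and> M0 \<le> L \<and> L \<le> max M0 (kappa * Lbar)
            \<and> v - gf y \<in> subdiff h H y \<and> norm v \<le> eps"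
  proof (intro allI impI)
    fix k y v xi L assume "run k = CStop y v xi L"
    then have c: "phi xi \<le> phi x0" "phi xi \<le> phi y" "Ml \<le> L" "L \<le> Lmx Ml" "v - gf y \<in> subdiff h H y" "norm v \<le> eps"
      using runI[of k] unfolding cinv_def by auto
    have "L \<le> max M0 (kappa * Lbar)" using c(4) Ml2 unfolding Lmx_def by linarith
    then show "phi xi \<le> min (phi (z 0)) (phi y) \<and> M0 \<le> L \<and> L \<le> max M0 (kappa * Lbar)
            \<and> v - gf y \<in> subdiff h H y \<and> norm v \<le> eps"
      using c P(2) Ml1 by simp
  qed
  have partc: "0 < m \<and> m \<le> mubar \<longrightarrow> (\<forall>k z' L'. run k \<noteq> CRestart z' L')
            \<and> (\<exists>k y v xi L. int k \<le> Fmax Ml + S0 m x0 Ml \<and> run k = CStop y v xi L)"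
  proof (intro impI conjI allI notI)
    fix k z' L' assume mm: "0 < m \<and> m \<le> mubar" and "run k = CRestart z' L'"
    then show False using runI[of k] unfolding cinv_def by auto
  next
    assume mm: "0 < m \<and> m \<le> mubar"
    have "\<exists>y v xi L. run K = CStop y v xi L"
    proof (cases "run K")
      case (CRun Lt A tau x y xi) then show ?thesis using notrun by blast
    next
      case (CRestart z' L') then show ?thesis using runI[of K] mm unfolding cinv_def by auto
    next
      case (CStop y v xi L) then show ?thesis by blast
    qed
    then show "\<exists>k y v xi L. int k \<le> Fmax Ml + S0 m x0 Ml \<and> run k = CStop y v xi L"
      using KK by (intro exI[of _ K]) auto
  qed
  have pa: "\<exists>k. int k \<le> Fmax Ml + S0 m x0 Ml \<and> (\<forall>Lt A tau x y xi. run k \<noteq> CRun Lt A tau x y xi)"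
    using notrun KK by (intro exI[of _ K]) simp
  show ?thesis unfolding x0_def[symmetric] m_def[symmetric] Ml_def[symmetric]
    by (intro conjI; (rule pa | rule partb | rule partc))
qed

lemma main2:
  fixes z :: "nat \<Rightarrow> 'a" and Mbar Mlow mu :: "nat \<Rightarrow> real" and l :: nat
  assumes z0: "z 0 \<in> H" and Mbar0: "Mbar 0 = M0" and M0: "M0 > 0" and mu_0: "mu 0 > 0" and l: "l \<ge> 1"
    and Mlow_range: "\<And>i. 1 \<le> i \<Longrightarrow> i \<le> l \<Longrightarrow>
           max (Mbar (i - 1) / 4) (Mbar 0) \<le> Mlow i \<and> Mlow i \<le> Mbar (i - 1)"
    and prev_restart: "\<And>i. 1 \<le> i \<Longrightarrow> i < l \<Longrightarrow>
           (\<exists>k. cycle_run f gf h H chi beta eps (mu (i - 1)) (z (i - 1)) (Mlow i) k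
                  = CRestart (z i) (Mbar i)) \<and> mu i = mu (i - 1) / 2"
    and run: "run = cycle_run f gf h H chi beta eps (mu (l - 1)) (z (l - 1)) (Mlow l)"
    and N: "N = (let K = 2 * beta / (1 - chi);
                  C = 8 / mubar * ((f (z (l - 1)) + h (z (l - 1))) - (f zstar + h zstar));
                  zeta = Lbar + max (Mlow l) (K * Lbar);
                  Q = 2 * sqrt 2 * sqrt (max (Mlow l) (K * Lbar) / mu (l - 1))
              in of_int (ceiling ((1 + Q) * logp 1 (C * zeta\<^sup>2 / (chi * eps\<^sup>2)) + 1))
                 + of_int (ceiling (logp 0 (2 * Lbar / ((1 - chi) * Mlow l)) / ln beta)))"
  shows "(\<exists>k. real k \<le> N \<and> (\<forall>Lt A tau x y xi. run k \<noteq> CRun Lt A tau x y xi))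
       \<and> (\<forall>k y v xi L. run k = CStop y v xi L \<longrightarrow>
            f xi + h xi \<le> min (f (z 0) + h (z 0)) (f y + h y)
            \<and> M0 \<le> L \<and> L \<le> max M0 (2 * beta / (1 - chi) * Lbar)
            \<and> v - gf y \<in> subdiff h H y \<and> norm v \<le> eps)
       \<and> (0 < mu (l - 1) \<and> mu (l - 1) \<le> mubar \<longrightarrow>
            (\<forall>k z' L'. run k \<noteq> CRestart z' L')
            \<and> (\<exists>k y v xi L. real k \<le> N \<and> run k = CStop y v xi L))"
proof -
  have NE: "N = real_of_int (Fmax (Mlow l) + S0 (mu (l - 1)) (z (l - 1)) (Mlow l))"
    unfolding N by (simp add: Let_def S0_def Fmax_def Qf_def Tf_def Cf_def Lmx_def kappa_def phi_def)
  have conv: "int k \<le> Fmax (Mlow l) + S0 (mu (l - 1)) (z (l - 1)) (Mlow l) \<Longrightarrow> real k \<le> N" for k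
    unfolding NE by (metis of_int_le_iff of_int_of_nat_eq)
  note M = main[OF z0 Mbar0 M0 mu_0 l Mlow_range prev_restart run]
  show ?thesis
  proof (intro conjI)
    show "\<exists>k. real k \<le> N \<and> (\<forall>Lt A tau x y xi. run k \<noteq> CRun Lt A tau x y xi)"
      using M conv by blast
    show "\<forall>k y v xi L. run k = CStop y v xi L \<longrightarrow>
            f xi + h xi \<le> min (f (z 0) + h (z 0)) (f y + h y)
            \<and> M0 \<le> L \<and> L \<le> max M0 (2 * beta / (1 - chi) * Lbar)
            \<and> v - gf y \<in> subdiff h H y \<and> norm v \<le> eps"
      using M unfolding phi_def kappa_def by blast
    show "0 < mu (l - 1) \<and> mu (l - 1) \<le> mubar \<longrightarrow>
            (\<forall>k z' L'. run k \<noteq> CRestart z' L')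
            \<and> (\<exists>k y v xi L. real k \<le> N \<and> run k = CStop y v xi L)"
      using M conv by blast
  qed
qed

end

theorem proposition2p1:
  fixes f :: "'a::euclidean_space \<Rightarrow> real" and gf :: "'a \<Rightarrow> 'a"
    and h :: "'a \<Rightarrow> real" and H :: "'a set"
    and Lbar mubar chi beta mu0 M0 eps :: real and zstar :: 'a
    and z :: "nat \<Rightarrow> 'a" and Mbar Mlow mu :: "nat \<Rightarrow> real" and l :: nat
  assumes grad: "\<And>x. (f has_derivative (\<lambda>d. inner (gf x) d)) (at x)"
    and f_convex: "convex_on UNIV f"
    and f_lip: "\<And>x x'. norm (gf x' - gf x) \<le> Lbar * norm (x' - x)"
    and Lbar_pos: "Lbar > 0"
    and H_ne: "H \<noteq> {}" and H_convex: "convex H" and h_convex: "convex_on H h"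
    and h_lsc: "\<And>c. closed {x \<in> H. h x \<le> c}"
    and mubar_pos: "mubar > 0"
    and phi_sc: "strongly_convex_on H mubar (\<lambda>x. f x + h x)"
    and zstar: "zstar \<in> H" "\<And>x. x \<in> H \<Longrightarrow> f zstar + h zstar \<le> f x + h x"
    and chi: "0 < chi" "chi < 1" and beta: "beta > 1"
    and mu0: "mu0 > 0" and M0: "M0 > 0" and eps: "eps > 0"
    and z0: "z 0 \<in> H" and Mbar0: "Mbar 0 = M0" and mu_0: "mu 0 = mu0"
    and l: "l \<ge> 1"
    and Mlow_range: "\<And>i. 1 \<le> i \<Longrightarrow> i \<le> l \<Longrightarrow>
           max (Mbar (i - 1) / 4) (Mbar 0) \<le> Mlow i \<and> Mlow i \<le> Mbar (i - 1)"
    and prev_restart: "\<And>i. 1 \<le> i \<Longrightarrow> i < l \<Longrightarrow>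
           (\<exists>k. cycle_run f gf h H chi beta eps (mu (i - 1)) (z (i - 1)) (Mlow i) k
                  = CRestart (z i) (Mbar i)) \<and> mu i = mu (i - 1) / 2"
  defines "kappa \<equiv> 2 * beta / (1 - chi)"
    and "N \<equiv> (let K = 2 * beta / (1 - chi);
                  C = 8 / mubar * ((f (z (l - 1)) + h (z (l - 1))) - (f zstar + h zstar));
                  zeta = Lbar + max (Mlow l) (K * Lbar);
                  Q = 2 * sqrt 2 * sqrt (max (Mlow l) (K * Lbar) / mu (l - 1))
              in of_int (ceiling ((1 + Q) * logp 1 (C * zeta\<^sup>2 / (chi * eps\<^sup>2)) + 1))
                 + of_int (ceiling (logp 0 (2 * Lbar / ((1 - chi) * Mlow l)) / ln beta)))"
    and "run \<equiv> cycle_run f gf h H chi beta eps (mu (l - 1)) (z (l - 1)) (Mlow l)"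
  shows "(\<exists>k. real k \<le> N \<and> (\<forall>Lt A tau x y xi. run k \<noteq> CRun Lt A tau x y xi))
       \<and> (\<forall>k y v xi L. run k = CStop y v xi L \<longrightarrow>
            f xi + h xi \<le> min (f (z 0) + h (z 0)) (f y + h y)
            \<and> M0 \<le> L \<and> L \<le> max M0 (kappa * Lbar)
            \<and> v - gf y \<in> subdiff h H y \<and> norm v \<le> eps)
       \<and> (0 < mu (l - 1) \<and> mu (l - 1) \<le> mubar \<longrightarrow>
            (\<forall>k z' L'. run k \<noteq> CRestart z' L')
            \<and> (\<exists>k y v xi L. real k \<le> N \<and> run k = CStop y v xi L))"
proof -
  have C: "ctx f gf h H Lbar mubar chi beta eps zstar"
    by (rule ctx.intro) (use grad f_convex f_lip Lbar_pos H_ne H_convex h_convex h_lsc mubar_pos phi_sc zstar chi beta eps in auto)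
  have mu0p: "mu 0 > 0" using mu_0 mu0 by simp
  show ?thesis
    unfolding kappa_def
    by (rule ctx.main2[OF C z0 Mbar0 M0 mu0p l Mlow_range prev_restart run_def[THEN meta_eq_to_obj_eq] N_def[THEN meta_eq_to_obj_eq]])
qed

end
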